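(* Under Assumptions A1–A4, for every evaluation step $n\in\{E,2E,3E,\dots\}$ the lengths produced by the core Two-Tailed Averaging algorithm satisfy $S(n)<\mathcal{O}(n)$ and $L(n)<2\mathcal{O}(n)+E$.
   Context: Let $\Theta=\mathbb{R}^d$, let $(\theta_t)_{t\in\mathbb{N}_0}$ be a sequence in $\Theta$, let $f\colon\Theta\to\mathbb{R}$ be a loss function, and let $E\in\mathbb{N}$ be the evaluation period. Evaluation steps are the multiples of $E$. For integers $t\ge \Delta\ge 1$ write $\mathrm{avg}(t,\Delta)=\frac{1}{\Delta}\sum_{i=t+1-\Delta}^{t}\theta_i$; set $f(\mathrm{avg}(t,0))=+\infty$. Core Two-Tailed Averaging: it maintains integers $S,L$ and vectors $\theta^S,\theta^L$, initially $S=L=0$, $\theta^S=\theta^L=0$. For $t=1,2,\dots$: first $\theta_t$ is added to both averages, i.e. $\theta^S\leftarrow\theta^S+(\theta_t-\theta^S)/(S+1)$, $S\leftarrow S+1$, and $\theta^L\leftarrow\theta^L+(\theta_t-\theta^L)/(L+1)$, $L\leftarrow L+1$ (so $\theta^S=\mathrm{avg}(t,S)$, $\theta^L=\mathrm{avg}(t,L)$). Then, if $E$ divides $t$: if $f(\theta^S)\le f(\theta^L)$, a switch is performed: $L\leftarrow S$, $\theta^L\leftarrow\theta^S$, $S\leftarrow 0$. $S(t),L(t)$ denote the values after the $t$-th pass through the loop. Optimal length: for $t\ge1$, $\mathcal{O}(t)$ is a (fixed) minimizer of $\Delta\mapsto f(\mathrm{avg}(t,\Delta))$ over $\Delta\in\{1,\dots,t\}$;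 $\mathcal{O}_E(n)=\lfloor \mathcal{O}(n)/E\rfloor E$ and $\mathcal{O}^E(n)=\lceil \mathcal{O}(n)/E\rceil E$. Assumptions (for all evaluation steps $n\ge E$): A1: $\Delta\mapsto f(\mathrm{avg}(n,\Delta))$ is strictly decreasing on $\Delta\in\{0,E,2E,\dots,\mathcal{O}_E(n)\}$. A2: for every integer $n_+$ with $\mathcal{O}^E(n)\le n_+\le n$, $f(\mathrm{avg}(n,\mathcal{O}^E(n)))\le f(\mathrm{avg}(n,n_+))$. A3: there exists a positive multiple $n_s$ of $E$ with $\mathcal{O}(n+n_s)-\mathcal{O}(n)<n_s$. A4: $\mathcal{O}(n)\le\mathcal{O}(n+E)$. *)

theory Defs
  imports "HOL-Analysis.Analysis"
begin

definition avg :: "(nat \<Rightarrow> real ^ 'd) \<Rightarrow> nat \<Rightarrow> nat \<Rightarrow> real ^ 'd" where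
  "avg \<theta> t \<Delta> = (1 / real \<Delta>) *\<^sub>R (\<Sum>i\<in>{t + 1 - \<Delta>..t}. \<theta> i)"

definition favg :: "(real ^ 'd \<Rightarrow> real) \<Rightarrow> (nat \<Rightarrow> real ^ 'd) \<Rightarrow> nat \<Rightarrow> nat \<Rightarrow> ereal" where
  "favg f \<theta> t \<Delta> = (if \<Delta> = 0 then \<infinity> else ereal (f (avg \<theta> t \<Delta>)))"

fun tta :: "(real ^ 'd \<Rightarrow> real) \<Rightarrow> (nat \<Rightarrow> real ^ 'd) \<Rightarrow> nat \<Rightarrow> nat
            \<Rightarrow> nat \<times> nat \<times> (real ^ 'd) \<times> (real ^ 'd)" where
  "tta f \<theta> E 0 = (0, 0, 0, 0)"
| "tta f \<theta> E (Suc t) =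
     (case tta f \<theta> E t of (S, L, \<theta>S, \<theta>L) \<Rightarrow>
       let \<theta>S' = \<theta>S + (1 / real (S + 1)) *\<^sub>R (\<theta> (Suc t) - \<theta>S);
           S' = S + 1;
           \<theta>L' = \<theta>L + (1 / real (L + 1)) *\<^sub>R (\<theta> (Suc t) - \<theta>L);
           L' = L + 1
       in if E dvd Suc t \<and> f \<theta>S' \<le> f \<theta>L' then (0, S', \<theta>S', \<theta>S')
          else (S', L', \<theta>S', \<theta>L'))"

definition S_len :: "(real ^ 'd \<Rightarrow> real) \<Rightarrow> (nat \<Rightarrow> real ^ 'd) \<Rightarrow> nat \<Rightarrow> nat \<Rightarrow> nat" where
  "S_len f \<theta> E t = fst (tta f \<theta> E t)"

definition L_len :: "(real ^ 'd \<Rightarrow> real) \<Rightarrow> (nat \<Rightarrow> real ^ 'd) \<Rightarrow> nat \<Rightarrow> nat \<Rightarrow> nat" where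
  "L_len f \<theta> E t = fst (snd (tta f \<theta> E t))"

definition OptE_floor :: "(nat \<Rightarrow> nat) \<Rightarrow> nat \<Rightarrow> nat \<Rightarrow> nat" where
  "OptE_floor Opt E n = (Opt n div E) * E"

definition OptE_ceil :: "(nat \<Rightarrow> nat) \<Rightarrow> nat \<Rightarrow> nat \<Rightarrow> nat" where
  "OptE_ceil Opt E n = ((Opt n + E - 1) div E) * E"

end

theory Submission
  imports Defs
begin

lemma avg_step:
  assumes "1 \<le> k" "k \<le> t"
  shows "avg \<theta> (Suc t) (Suc k) = avg \<theta> t k + (1 / real (k + 1)) *\<^sub>R (\<theta> (Suc t) - avg \<theta> t k)"
proof -
  have set: "{Suc t + 1 - Suc k..Suc t} = insert (Suc t) {t + 1 - k..t}" using assms by auto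
  have sum: "(\<Sum>i\<in>{Suc t + 1 - Suc k..Suc t}. \<theta> i) = \<theta> (Suc t) + (\<Sum>i\<in>{t + 1 - k..t}. \<theta> i)"
    unfolding set by (subst sum.insert) auto
  define A where "A = (\<Sum>i\<in>{t + 1 - k..t}. \<theta> i)"
  have k0: "real k \<noteq> 0" using assms by auto
  have "avg \<theta> (Suc t) (Suc k) = (1 / real (k+1)) *\<^sub>R (\<theta> (Suc t) + A)"
    unfolding avg_def sum A_def by simp
  also have "\<dots> = (1 / real k) *\<^sub>R A + (1 / real (k + 1)) *\<^sub>R (\<theta> (Suc t) - (1 / real k) *\<^sub>R A)"
  proof -
    have pos: "real k + real k * real k \<noteq> 0" proof - have "real k > 0" using assms by simp then show ?thesis by (smt (verit) mult_pos_pos) qed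
    have sc: "1 / (1 + real k) + 1 / (real k + real k * real k) = 1 / real k"
    proof -
      have kp: "real k > 0" using k0 by simp
      have "1 + real k > 0" using kp by simp
      have e: "real k + real k * real k = real k * (1 + real k)" by (simp add: algebra_simps)
      have "1 / (1 + real k) + 1 / (real k * (1 + real k)) = 1 / real k"
        using kp \<open>1 + real k > 0\<close> by (simp add: add_divide_distrib[symmetric] divide_simps)
      then show ?thesis unfolding e .
    qed
    have sc2: "(1 / (1 + real k)) *\<^sub>R A + (1 / (real k + real k * real k)) *\<^sub>R A = (1 / real k) *\<^sub>R A"
      by (subst scaleR_add_left[symmetric]) (simp only: sc)
    show ?thesis using k0 pos sc2 by (simp add: algebra_simps field_simps scaleR_diff_right)
  qed
  finally show ?thesis unfolding avg_def A_def .
qed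

lemma avg_one: "avg \<theta> (Suc t) (Suc 0) = \<theta> (Suc t)"
  unfolding avg_def by simp

definition Inv :: "(nat \<Rightarrow> real ^ 'd) \<Rightarrow> nat \<Rightarrow> nat \<Rightarrow> nat \<times> nat \<times> (real ^ 'd) \<times> (real ^ 'd) \<Rightarrow> bool" where
  "Inv \<theta> E t st = (case st of (S, L, a, b) \<Rightarrow> S \<le> L \<and> L \<le> t \<and> S mod E = t mod E \<and> L mod E = t mod E
      \<and> (1 \<le> S \<longrightarrow> a = avg \<theta> t S) \<and> (1 \<le> L \<longrightarrow> b = avg \<theta> t L))"

lemma upd_avg:
  assumes "S \<le> t" "1 \<le> S \<longrightarrow> a = avg \<theta> t S"
  shows "a + (1 / real (S + 1)) *\<^sub>R (\<theta> (Suc t) - a) = avg \<theta> (Suc t) (S + 1)"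
proof (cases "S = 0")
  case True then show ?thesis using avg_one[of \<theta> t] by simp
next
  case False then show ?thesis using assms avg_step[of S t \<theta>] by simp
qed

lemma tta_inv:
  assumes "E \<ge> 1"
  shows "Inv \<theta> E t (tta f \<theta> E t)"
proof (induction t)
  case 0 then show ?case by (simp add: Inv_def)
next
  case (Suc t)
  obtain S L a b where st: "tta f \<theta> E t = (S, L, a, b)" by (cases "tta f \<theta> E t") auto
  from Suc st have I: "S \<le> L" "L \<le> t" "S mod E = t mod E" "L mod E = t mod E"
     "1 \<le> S \<longrightarrow> a = avg \<theta> t S" "1 \<le> L \<longrightarrow> b = avg \<theta> t L" by (auto simp: Inv_def)
  have ua: "a + (1 / real (S + 1)) *\<^sub>R (\<theta> (Suc t) - a) = avg \<theta> (Suc t) (S + 1)"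
    using I by (intro upd_avg) auto
  have ub: "b + (1 / real (L + 1)) *\<^sub>R (\<theta> (Suc t) - b) = avg \<theta> (Suc t) (L + 1)"
    using I by (intro upd_avg) auto
  have mS: "(S + 1) mod E = Suc t mod E" using I(3) by (metis Suc_eq_plus1 mod_Suc_eq)
  have mL: "(L + 1) mod E = Suc t mod E" using I(4) by (metis Suc_eq_plus1 mod_Suc_eq)
  show ?case
  proof (cases "E dvd Suc t \<and> f (avg \<theta> (Suc t) (S + 1)) \<le> f (avg \<theta> (Suc t) (L + 1))")
    case True
    then have "tta f \<theta> E (Suc t) = (0, S + 1, avg \<theta> (Suc t) (S + 1), avg \<theta> (Suc t) (S + 1))"
      using st ua ub by (simp add: Let_def)
    then show ?thesis using I mS True by (auto simp: Inv_def)
  next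
    case False
    then have "tta f \<theta> E (Suc t) = (S + 1, L + 1, avg \<theta> (Suc t) (S + 1), avg \<theta> (Suc t) (L + 1))"
      using st ua ub by (simp add: Let_def)
    then show ?thesis using I mS mL by (auto simp: Inv_def)
  qed
qed

lemma tta_step:
  fixes f :: "real ^ 'd \<Rightarrow> real" and \<theta> :: "nat \<Rightarrow> real ^ 'd" and t :: nat
  assumes "E \<ge> 1"
  defines "c \<equiv> E dvd Suc t \<and> f (avg \<theta> (Suc t) (S_len f \<theta> E t + 1)) \<le> f (avg \<theta> (Suc t) (L_len f \<theta> E t + 1))"
  shows "S_len f \<theta> E (Suc t) = (if c then 0 else S_len f \<theta> E t + 1)"
    "L_len f \<theta> E (Suc t) = (if c then S_len f \<theta> E t + 1 else L_len f \<theta> E t + 1)"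
proof -
  obtain S L a b where st: "tta f \<theta> E t = (S, L, a, b)" by (cases "tta f \<theta> E t") auto
  from tta_inv[OF assms(1), of \<theta> t f] st have I: "S \<le> L" "L \<le> t"
     "1 \<le> S \<longrightarrow> a = avg \<theta> t S" "1 \<le> L \<longrightarrow> b = avg \<theta> t L" by (auto simp: Inv_def)
  have ua: "a + (1 / real (S + 1)) *\<^sub>R (\<theta> (Suc t) - a) = avg \<theta> (Suc t) (S + 1)"
    using I by (intro upd_avg) auto
  have ub: "b + (1 / real (L + 1)) *\<^sub>R (\<theta> (Suc t) - b) = avg \<theta> (Suc t) (L + 1)"
    using I by (intro upd_avg) auto
  have SL: "S_len f \<theta> E t = S" "L_len f \<theta> E t = L" using st by (auto simp: S_len_def L_len_def)
  show "S_len f \<theta> E (Suc t) = (if c then 0 else S_len f \<theta> E t + 1)"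
    "L_len f \<theta> E (Suc t) = (if c then S_len f \<theta> E t + 1 else L_len f \<theta> E t + 1)"
    unfolding c_def SL using st ua ub by (auto simp: Let_def S_len_def L_len_def)
qed

lemma SL_props:
  assumes "E \<ge> 1"
  shows "S_len f \<theta> E t \<le> L_len f \<theta> E t" "L_len f \<theta> E t \<le> t"
    "S_len f \<theta> E t mod E = t mod E" "L_len f \<theta> E t mod E = t mod E"
  using tta_inv[OF assms, of \<theta> t f]
  by (auto simp: Inv_def S_len_def L_len_def split: prod.splits)

lemma block:
  assumes "E \<ge> 1" "E dvd m" "j < E"
  shows "S_len f \<theta> E (m + j) = S_len f \<theta> E m + j \<and> L_len f \<theta> E (m + j) = L_len f \<theta> E m + j"
  using assms(3)
proof (induction j)
  case 0 then show ?case by simp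
next
  case (Suc j)
  have nd: "\<not> E dvd Suc (m + j)"
  proof
    assume "E dvd Suc (m + j)"
    then have "E dvd m + Suc j" by simp
    then have "E dvd Suc j" using assms(2) dvd_add_right_iff by blast
    then show False using Suc.prems by (auto dest: dvd_imp_le)
  qed
  show ?case using Suc tta_step[OF assms(1), of f \<theta> "m + j"] nd by simp
qed

lemma eval_step:
  fixes f :: "real ^ 'd \<Rightarrow> real" and \<theta> :: "nat \<Rightarrow> real ^ 'd"
  assumes "E \<ge> 1" "E dvd m"
  defines "c \<equiv> f (avg \<theta> (m + E) (S_len f \<theta> E m + E)) \<le> f (avg \<theta> (m + E) (L_len f \<theta> E m + E))"
  shows "S_len f \<theta> E (m + E) = (if c then 0 else S_len f \<theta> E m + E)"
    "L_len f \<theta> E (m + E) = (if c then S_len f \<theta> E m + E else L_len f \<theta> E m + E)"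
proof -
  have b: "S_len f \<theta> E (m + (E - 1)) = S_len f \<theta> E m + (E - 1) \<and> L_len f \<theta> E (m + (E - 1)) = L_len f \<theta> E m + (E - 1)"
    using block[OF assms(1,2), of "E - 1" f \<theta>] assms(1) by simp
  have e: "Suc (m + (E - 1)) = m + E" using assms(1) by simp
  have d: "E dvd m + E" using assms(2) by simp
  show "S_len f \<theta> E (m + E) = (if c then 0 else S_len f \<theta> E m + E)"
    "L_len f \<theta> E (m + E) = (if c then S_len f \<theta> E m + E else L_len f \<theta> E m + E)"
    using tta_step[OF assms(1), of f \<theta> "m + (E - 1)"] b d assms(1) unfolding e c_def by auto
qed

theorem mainTheorem2:
  fixes \<theta> :: "nat \<Rightarrow> real ^ 'd" and f :: "real ^ 'd \<Rightarrow> real"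
    and E :: nat and Opt :: "nat \<Rightarrow> nat"
  assumes E_pos: "E \<ge> 1"
    and Opt_range: "\<And>t. t \<ge> 1 \<Longrightarrow> 1 \<le> Opt t \<and> Opt t \<le> t"
    and Opt_min: "\<And>t \<Delta>. t \<ge> 1 \<Longrightarrow> 1 \<le> \<Delta> \<Longrightarrow> \<Delta> \<le> t \<Longrightarrow>
                    f (avg \<theta> t (Opt t)) \<le> f (avg \<theta> t \<Delta>)"
    and A1: "\<And>n i j. E dvd n \<Longrightarrow> n \<ge> E \<Longrightarrow> i < j \<Longrightarrow> j * E \<le> OptE_floor Opt E n \<Longrightarrow>
               favg f \<theta> n (j * E) < favg f \<theta> n (i * E)"
    and A2: "\<And>n n_plus. E dvd n \<Longrightarrow> n \<ge> E \<Longrightarrow> OptE_ceil Opt E n \<le> n_plus \<Longrightarrow> n_plus \<le> n \<Longrightarrow>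
               favg f \<theta> n (OptE_ceil Opt E n) \<le> favg f \<theta> n n_plus"
    and A3: "\<And>n. E dvd n \<Longrightarrow> n \<ge> E \<Longrightarrow>
               \<exists>n_s. n_s > 0 \<and> E dvd n_s \<and> int (Opt (n + n_s)) - int (Opt n) < int n_s"
    and A4: "\<And>n. E dvd n \<Longrightarrow> n \<ge> E \<Longrightarrow> Opt n \<le> Opt (n + E)"
    and n_eval: "E dvd n" "n \<ge> E"
  shows "S_len f \<theta> E n < Opt n \<and> L_len f \<theta> E n < 2 * Opt n + E"
proof -
  let ?S = "S_len f \<theta> E" and ?L = "L_len f \<theta> E"
  have main: "?S (k * E) < Opt (k * E) \<and> ?L (k * E) < ?S (k * E) + Opt (k * E) + E" if "k \<ge> 1" for k
    using that
  proof (induction k rule: dec_induct)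
    case base
    have "?S (0 + E) = 0" "?L (0 + E) = E"
      using eval_step[OF E_pos, of 0 f \<theta>] by (simp_all add: S_len_def L_len_def)
    moreover have "Opt E \<ge> 1" using Opt_range E_pos by auto
    ultimately show ?case by simp
  next
    case (step k)
    define m where "m = k * E"
    define nn where "nn = m + E"
    have km: "Suc k * E = nn" unfolding nn_def m_def by simp
    have dm: "E dvd m" unfolding m_def by simp
    have mE: "m \<ge> E" unfolding m_def using step.hyps by simp
    have dn: "E dvd nn" "nn \<ge> E" unfolding nn_def using dm by auto
    define s where "s = ?S m + E"
    define l where "l = ?L m + E"
    define c where "c = (f (avg \<theta> nn s) \<le> f (avg \<theta> nn l))"
    have ev: "?S nn = (if c then 0 else s)" "?L nn = (if c then s else l)"
      using eval_step[OF E_pos dm, of f \<theta>] unfolding nn_def s_def l_def c_def by auto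
    have IH: "?S m < Opt m" "?L m < ?S m + Opt m + E" using step.IH m_def by auto
    have A4m: "Opt m \<le> Opt nn" using A4[OF dm mE] nn_def by simp
    have props: "?S m \<le> ?L m" "?L m \<le> m" "?S m mod E = 0"
      using SL_props[OF E_pos, of f \<theta> m] dm by auto
    obtain q where q: "?S m = q * E" using props(3) by (metis mod_0_imp_dvd dvd_def mult.commute)
    define Oo where "Oo = Opt nn"
    have Oo1: "Oo \<ge> 1" unfolding Oo_def using Opt_range dn E_pos by auto
    define cc where "cc = OptE_ceil Opt E nn"
    have cc_def2: "cc = ((Oo + E - 1) div E) * E" unfolding cc_def OptE_ceil_def Oo_def ..
    have s_le_cc: "s \<le> cc"
    proof -
      have "q * E < Oo" using IH(1) A4m q Oo_def by simp
      then have "(q + 1) * E \<le> Oo + E - 1" by simp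
      then have "q + 1 \<le> (Oo + E - 1) div E" using E_pos by (simp add: less_eq_div_iff_mult_less_eq)
      then have "(q + 1) * E \<le> cc" unfolding cc_def2 by (rule mult_le_mono1)
      then show ?thesis unfolding s_def q by simp
    qed
    have cc_le: "cc \<le> Oo + E - 1" unfolding cc_def2 by simp
    have sl: "s \<le> l" "l \<le> nn" unfolding s_def l_def nn_def using props by auto
    have s_lt: "s < Oo" if nc: "\<not> c"
    proof (rule ccontr)
      assume "\<not> s < Oo"
      then have "Oo \<le> (q + 1) * E" unfolding s_def q by simp
      then have "Oo + E - 1 < (q + 2) * E" using E_pos Oo1 by simp
      then have "(Oo + E - 1) div E < q + 2" by (rule less_mult_imp_div_less)
      then have "(Oo + E - 1) div E \<le> q + 1" by simp
      then have "cc \<le> (q + 1) * E" unfolding cc_def2 by (rule mult_le_mono1)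
      then have "cc \<le> s" unfolding s_def q by simp
      then have scc: "s = cc" using s_le_cc by simp
      have "favg f \<theta> nn cc \<le> favg f \<theta> nn l" using A2[OF dn, of l] sl scc unfolding cc_def by simp
      moreover have "cc \<ge> 1" "l \<ge> 1" using scc sl E_pos unfolding s_def by auto
      ultimately have "f (avg \<theta> nn s) \<le> f (avg \<theta> nn l)" using scc unfolding favg_def by simp
      then show False using nc c_def by simp
    qed
    show ?case
    proof (cases c)
      case True
      then show ?thesis using ev km Oo1 s_le_cc cc_le Oo_def by simp
    next
      case False
      then show ?thesis using ev km s_lt IH A4m Oo_def unfolding s_def l_def by simp
    qed
  qed
  obtain k where k: "n = k * E" using n_eval(1) by (metis dvd_def mult.commute)
  have "k \<ge> 1" using k n_eval(2) E_pos by (cases k) auto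
  from main[OF this] k show ?thesis by simp
qed

end
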